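(* Let $(C,D)$ define an irreducible MSPP with $C=-\mathrm{diag}(c_1,\dots,c_p)$, $c_i>0$. Let $\kappa=\frac{\min_i c_i+\max_i c_i}{2}$ and $\gamma=\sqrt{(\min_i c_i)(\max_i c_i)}$. Then the squared coefficient of variation of the event-stationary inter-event time satisfies $$1\le c^2\le 2\frac{\kappa^2}{\gamma^2}-1 .$$
   Context: A Markovian arrival process (MAP) of order $p$ is specified by $p\times p$ real matrices $C$ and $D$ such that $D$ has nonnegative entries, $C$ has nonnegative off-diagonal entries, and $Q=C+D$ is the generator (row sums zero) of an irreducible continuous-time Markov chain on $\{1,\dots,p\}$; $C$ is assumed nonsingular. An MSPP is a MAP with $C$ diagonal. $\mathbf{1}$ is the all-ones column vector; $\boldsymbol{\pi}$ is the stationary distribution of $Q$; $\boldsymbol{\alpha}$ is the stationary distribution of $P=(-C)^{-1}D$. The event-stationary inter-event time $T_1^{\alpha}$ has $\mathbb{P}(T_1^{\alpha}>t)=\boldsymbol{\alpha}e^{Ct}\mathbf{1}$, and $c^2=\mathrm{Var}(T_1^{\alpha})/\mathbb{E}^2[T_1^{\alpha}]$, which satisfies $c^2+1=2\,\boldsymbol{\pi}C\mathbf{1}\,\boldsymbol{\pi}C^{-1}\mathbf{1}$. *)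

theory Defs
  imports "HOL-Analysis.Analysis"
begin

text \<open>Matrices of order p are real^'n^'n with p = CARD('n); row vectors are real^'n,
  acted on from the right via v*.\<close>

definition is_generator :: "real^'n::finite^'n \<Rightarrow> bool" where
  "is_generator Q \<longleftrightarrow> (\<forall>i j. i \<noteq> j \<longrightarrow> Q$i$j \<ge> 0) \<and> (\<forall>i. (\<Sum>j\<in>UNIV. Q$i$j) = 0)"

definition irreducible_gen :: "real^'n::finite^'n \<Rightarrow> bool" where
  "irreducible_gen Q \<longleftrightarrow> (\<forall>i j. (i, j) \<in> {(k, l). k \<noteq> l \<and> Q$k$l > 0}\<^sup>*)"

definition is_MAP :: "real^'n::finite^'n \<Rightarrow> real^'n^'n \<Rightarrow> bool" where
  "is_MAP C D \<longleftrightarrow> (\<forall>i j. D$i$j \<ge> 0) \<and> (\<forall>i j. i \<noteq> j \<longrightarrow> C$i$j \<ge> 0)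
     \<and> is_generator (C + D) \<and> irreducible_gen (C + D) \<and> invertible C"

definition is_MSPP :: "real^'n::finite^'n \<Rightarrow> real^'n^'n \<Rightarrow> bool" where
  "is_MSPP C D \<longleftrightarrow> is_MAP C D \<and> (\<forall>i j. i \<noteq> j \<longrightarrow> C$i$j = 0)"

definition is_distribution :: "real^'n::finite \<Rightarrow> bool" where
  "is_distribution v \<longleftrightarrow> (\<forall>i. v$i \<ge> 0) \<and> (\<Sum>i\<in>UNIV. v$i) = 1"

definition stationary_dtmc :: "real^'n::finite \<Rightarrow> real^'n^'n \<Rightarrow> bool" where
  "stationary_dtmc a P \<longleftrightarrow> is_distribution a \<and> a v* P = a"

definition neg_diag :: "('n::finite \<Rightarrow> real) \<Rightarrow> real^'n^'n" where
  "neg_diag c = (\<chi> i j. if i = j then - c i else 0)"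

text \<open>Survival function of the event-stationary inter-event time for C = -diag(c):
  alpha e^{Ct} 1 = sum_i alpha_i e^{-c_i t}.\<close>
definition mspp_surv :: "real^'n::finite \<Rightarrow> ('n \<Rightarrow> real) \<Rightarrow> real \<Rightarrow> real" where
  "mspp_surv a c t = (\<Sum>i\<in>UNIV. a$i * exp (- c i * t))"

text \<open>Moments of a nonnegative r.v. T via its survival function S:
  E[T] = int_0^inf S, E[T^2] = int_0^inf 2 t S(t) dt.\<close>
definition mean_surv :: "(real \<Rightarrow> real) \<Rightarrow> real" where
  "mean_surv S = integral {0..} S"

definition second_moment_surv :: "(real \<Rightarrow> real) \<Rightarrow> real" where
  "second_moment_surv S = integral {0..} (\<lambda>t. 2 * t * S t)"

definition scv_surv :: "(real \<Rightarrow> real) \<Rightarrow> real" where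
  "scv_surv S = (second_moment_surv S - (mean_surv S)\<^sup>2) / (mean_surv S)\<^sup>2"

end

theory Submission
  imports Defs "HOL-Real_Asymp.Real_Asymp"
begin

lemma has_integral_t_exp:
  assumes "a > 0"
  shows "((\<lambda>x::real. x * exp (-a*x)) has_integral 1 / a^2) {0..}"
proof (intro has_integral_to_inf integrable_continuous_interval continuous_intros)
  have "((\<lambda>x. x * exp (-a*x)) has_integral
      ((-(y/a + 1/a^2) * exp (-a*y)) - (-(0/a + 1/a^2) * exp (-a*0)))) {0..y}"
    if "y \<ge> 0" for y
    using that \<open>a > 0\<close>
    by (intro fundamental_theorem_of_calculus)
       (auto intro!: derivative_eq_intros
             simp flip: has_real_derivative_iff_has_vector_derivative
             simp: field_simps power2_eq_square)
  then have "\<forall>\<^sub>F y in at_top. integral {0..y} (\<lambda>x. x * exp (-a*x)) = -(y/a + 1/a^2) * exp (-a*y) + 1/a^2"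
    using eventually_at_top_linorder[of
        "\<lambda>y. integral {0..y} (\<lambda>x. x * exp (-a*x)) = -(y/a + 1/a^2) * exp (-a*y) + 1/a^2"]
    by auto
  moreover have "((\<lambda>y::real. -(y/a + 1/a^2) * exp (-a*y) + 1/a^2) \<longlongrightarrow> 1/a^2) at_top"
    using \<open>a > 0\<close> by real_asymp
  ultimately show "((\<lambda>y. integral {0..y} (\<lambda>x. x * exp (-a*x))) \<longlongrightarrow> 1/a^2) at_top"
    by (simp add: filterlim_cong)
qed auto

lemma mean_mspp:
  assumes "\<And>i. c i > 0"
  shows "mean_surv (mspp_surv a c) = (\<Sum>i\<in>UNIV. a$i / c i)"
proof -
  have "((\<lambda>t. \<Sum>i\<in>UNIV. a$i * exp (- c i * t)) has_integral (\<Sum>i\<in>UNIV. a$i * (exp (- c i * 0) / c i))) {0..}"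
    by (intro has_integral_sum has_integral_mult_right has_integral_exp_minus_to_infinity assms) auto
  then show ?thesis unfolding mean_surv_def mspp_surv_def
    by (simp add: integral_unique)
qed

lemma second_mspp:
  assumes "\<And>i. c i > 0"
  shows "second_moment_surv (mspp_surv a c) = 2 * (\<Sum>i\<in>UNIV. a$i / (c i)^2)"
proof -
  have "((\<lambda>t. \<Sum>i\<in>UNIV. (2 * a$i) * (t * exp (- c i * t))) has_integral (\<Sum>i\<in>UNIV. (2 * a$i) * (1 / (c i)^2))) {0..}"
    by (intro has_integral_sum has_integral_mult_right has_integral_t_exp assms) auto
  moreover have "(\<lambda>t. 2 * t * mspp_surv a c t) = (\<lambda>t. \<Sum>i\<in>UNIV. (2 * a$i) * (t * exp (- c i * t)))"
    unfolding mspp_surv_def by (auto simp: sum_distrib_left intro!: sum.cong)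
  ultimately show ?thesis unfolding second_moment_surv_def
    by (simp add: integral_unique sum_distrib_left)
qed

lemma kantorovich_aux:
  fixes a :: "'n::finite \<Rightarrow> real" and x :: "'n \<Rightarrow> real"
  assumes a0: "\<And>i. a i \<ge> 0" and a1: "(\<Sum>i\<in>UNIV. a i) = 1"
    and lo: "\<And>i. p \<le> x i" and hi: "\<And>i. x i \<le> q"
  shows "(\<Sum>i\<in>UNIV. a i * x i ^ 2) \<ge> (\<Sum>i\<in>UNIV. a i * x i)^2"
    and "(\<Sum>i\<in>UNIV. a i * x i ^ 2) \<le> (p + q) * (\<Sum>i\<in>UNIV. a i * x i) - p * q"
proof -
  define mu where "mu = (\<Sum>i\<in>UNIV. a i * x i)"
  have "0 \<le> (\<Sum>i\<in>UNIV. a i * (x i - mu)^2)"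
    using a0 by (intro sum_nonneg) auto
  also have "\<dots> = (\<Sum>i\<in>UNIV. a i * x i ^ 2) - 2 * mu * (\<Sum>i\<in>UNIV. a i * x i) + mu^2 * (\<Sum>i\<in>UNIV. a i)"
    by (simp add: power2_eq_square algebra_simps sum.distrib sum_subtractf sum_distrib_left)
  finally show "(\<Sum>i\<in>UNIV. a i * x i ^ 2) \<ge> (\<Sum>i\<in>UNIV. a i * x i)^2"
    using a1 by (simp add: mu_def power2_eq_square)
  have "(\<Sum>i\<in>UNIV. a i * x i ^ 2) \<le> (\<Sum>i\<in>UNIV. a i * ((p + q) * x i - p * q))"
  proof (intro sum_mono mult_left_mono)
    fix i
    have "0 \<le> (x i - p) * (q - x i)" using lo[of i] hi[of i] by (intro mult_nonneg_nonneg) auto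
    then show "x i ^ 2 \<le> (p + q) * x i - p * q" by (simp add: power2_eq_square algebra_simps)
  qed (use a0 in auto)
  also have "\<dots> = (p + q) * (\<Sum>i\<in>UNIV. a i * x i) - p * q * (\<Sum>i\<in>UNIV. a i)"
    by (simp add: algebra_simps sum_subtractf sum_distrib_left)
  finally show "(\<Sum>i\<in>UNIV. a i * x i ^ 2) \<le> (p + q) * (\<Sum>i\<in>UNIV. a i * x i) - p * q"
    using a1 by simp
qed

theorem proposition4:
  fixes c :: "'n::finite \<Rightarrow> real" and D :: "real^'n^'n" and \<alpha> :: "real^'n"
  assumes "\<And>i. c i > 0"
    and "is_MSPP (neg_diag c) D"
    and "stationary_dtmc \<alpha> (matrix_inv (- neg_diag c) ** D)"
  shows "1 \<le> scv_surv (mspp_surv \<alpha> c)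
       \<and> scv_surv (mspp_surv \<alpha> c)
           \<le> 2 * (((Min (range c) + Max (range c)) / 2)\<^sup>2
                 / (sqrt (Min (range c) * Max (range c)))\<^sup>2) - 1"
proof -
  have cpos: "\<And>i. c i > 0" by fact
  have a0: "\<And>i. \<alpha>$i \<ge> 0" and a1: "(\<Sum>i\<in>UNIV. \<alpha>$i) = 1"
    using assms(3) unfolding stationary_dtmc_def is_distribution_def by auto
  define m where "m = Min (range c)"
  define M where "M = Max (range c)"
  have mle: "\<And>i. m \<le> c i" unfolding m_def by simp
  have Mge: "\<And>i. c i \<le> M" unfolding M_def by simp
  obtain i0 where "m = c i0"
  proof -
    have "Min (range c) \<in> range c" by (rule Min_in) auto
    then show ?thesis using that unfolding m_def by blast
  qed
  then have mpos: "m > 0" using cpos by simp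
  have Mpos: "M > 0" using mpos mle[of i0] Mge[of i0] by simp
  define x where "x i = 1 / c i" for i
  have lo: "\<And>i. 1 / M \<le> x i" unfolding x_def using Mge cpos
    by (simp add: frac_le)
  have hi: "\<And>i. x i \<le> 1 / m" unfolding x_def using mle cpos mpos
    by (simp add: frac_le)
  define mu where "mu = (\<Sum>i\<in>UNIV. \<alpha>$i * x i)"
  define S where "S = (\<Sum>i\<in>UNIV. \<alpha>$i * x i ^ 2)"
  have mean: "mean_surv (mspp_surv \<alpha> c) = mu"
    unfolding mean_mspp[OF cpos] mu_def x_def by simp
  have sec: "second_moment_surv (mspp_surv \<alpha> c) = 2 * S"
    unfolding second_mspp[OF cpos] S_def x_def by (simp add: power_divide)
  have K1: "S \<ge> mu^2" and K2: "S \<le> (1/M + 1/m) * mu - 1/M * (1/m)"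
    using kantorovich_aux[of "\<lambda>i. \<alpha>$i", OF a0 a1 lo hi] unfolding S_def mu_def by auto
  have mu_ge: "mu \<ge> 1/M"
  proof -
    have "(\<Sum>i\<in>UNIV. \<alpha>$i * (1/M)) \<le> mu" unfolding mu_def
      using a0 lo by (intro sum_mono mult_left_mono) auto
    moreover have "(\<Sum>i\<in>UNIV. \<alpha>$i * (1/M)) = (\<Sum>i\<in>UNIV. \<alpha>$i) * (1/M)"
      by (rule sum_distrib_right[symmetric])
    ultimately show ?thesis using a1 by simp
  qed
  then have mupos: "mu > 0" using Mpos by (smt (verit) divide_pos_pos)
  have scv: "scv_surv (mspp_surv \<alpha> c) = 2 * S / mu^2 - 1"
    unfolding scv_surv_def mean sec using mupos by (simp add: field_simps)
  have "1 \<le> 2 * S / mu^2 - 1" using K1 mupos by (simp add: field_simps)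
  moreover have "2 * S / mu^2 - 1 \<le> 2 * (((m + M) / 2)\<^sup>2 / (sqrt (m * M))\<^sup>2) - 1"
  proof -
    have sq: "(sqrt (m * M))\<^sup>2 = m * M" using mpos Mpos by simp
    have "S * (m * M) \<le> ((1/M + 1/m) * mu - 1/M * (1/m)) * (m * M)"
      using K2 mpos Mpos by (intro mult_right_mono) auto
    also have "\<dots> = (m + M) * mu - 1"
      using mpos Mpos by (simp add: field_simps)
    also have "\<dots> \<le> ((m + M) * mu)^2 / 4"
      using sum_squares_ge_zero[of "(m+M)*mu - 2" 0] by (simp add: power2_eq_square algebra_simps)
    finally have "S * (m * M) \<le> ((m + M) * mu)^2 / 4" .
    then have "S / mu^2 \<le> ((m + M) / 2)\<^sup>2 / (m * M)"
      using mpos Mpos mupos by (simp add: field_simps power2_eq_square)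
    then show ?thesis unfolding sq by simp
  qed
  ultimately show ?thesis unfolding scv m_def M_def by simp
qed

end
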